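(* Let $g:\mathbb{R}\to[0,1]$ be measurable, even ($g(-x)=g(x)$) and $\pi$-periodic ($g(x+\pi)=g(x)$). For positive integers $m,n$ let $\mu=\pi/n$ and $$\tilde{G}(m,n)=\frac{1}{\pi}\int_{-\pi/2}^{\pi/2}\prod_{i=0}^{n-1} g(x+mi\mu)\,dx.$$ Then for all positive integers $m,n$, $\tilde{G}(m,n)\ge \tilde{G}(1,n)$.
   Context: $g(x)$ is the probability of not detecting a target (with rectangular symmetry) observed at angle $x$; $\tilde G(m,n)$ is the average probability of no detection over a uniformly distributed target orientation when $n$ independent observations are made at angles separated consecutively by $m\pi/n$. *)

theory Defs
  imports "HOL-Analysis.Analysis"
begin

definition Gtilde :: "(real \<Rightarrow> real) \<Rightarrow> nat \<Rightarrow> nat \<Rightarrow> real" where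
  "Gtilde g m n = (1 / pi) *
     (LBINT x=-(pi/2)..pi/2. (\<Prod>i<n. g (x + real m * real i * (pi / real n))))"

end

theory Submission
  imports Defs
begin

lemma bdd_int:
  fixes h :: "real \<Rightarrow> real"
  assumes "h \<in> borel_measurable borel" "\<And>x. \<bar>h x\<bar> \<le> 1"
  shows "set_integrable lborel {a..b} h"
proof (rule set_integrable_bound[where f="\<lambda>_. 1::real"])
  show "set_integrable lborel {a..b} (\<lambda>_. 1::real)"
    unfolding set_integrable_def
    by (rule borel_integrable_compact) auto
  show "set_borel_measurable lborel {a..b} h"
    unfolding set_borel_measurable_def using assms(1) by simp
  show "AE x in lborel. x \<in> {a..b} \<longrightarrow> norm (h x) \<le> norm (1::real)"
    using assms(2) by simp
qed

lemma bdd_integrable_on: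
  fixes h :: "real \<Rightarrow> real"
  assumes "h \<in> borel_measurable borel" "\<And>x. \<bar>h x\<bar> \<le> 1"
  shows "h integrable_on {a..b}"
  using set_borel_integral_eq_integral(1)[OF bdd_int[OF assms]] .

lemma period_shift:
  fixes h :: "real \<Rightarrow> real"
  assumes "h \<in> borel_measurable borel" "\<And>x. \<bar>h x\<bar> \<le> 1"
    and per: "\<And>x. h (x + pi) = h x" and c: "0 \<le> c" "c \<le> pi"
  shows "integral {a..a+pi} (\<lambda>x. h (x + c)) = integral {a..a+pi} h"
proof -
  have I: "\<And>u v. h integrable_on {u..v}" using bdd_integrable_on[OF assms(1,2)] .
  have "integral {a..a+pi} (\<lambda>x. h (x + c)) = integral {a+c-c..a+pi+c-c} (\<lambda>x. h (x + c))"
    by simp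
  also have "\<dots> = integral {a+c..a+pi+c} h" by (rule integral_shift_real_ivl)
  also have "\<dots> = integral {a+c..a+pi} h + integral {a+pi..a+pi+c} h"
    using Henstock_Kurzweil_Integration.integral_combine[where a="a+c" and c="a+pi" and b="a+pi+c" and f=h] c I by simp
  also have "integral {a+pi..a+pi+c} h = integral {a+pi-pi..a+c+pi-pi} (\<lambda>x. h (x + pi))"
    by (subst integral_shift_real_ivl) (simp_all add: algebra_simps)
  also have "\<dots> = integral {a..a+c} h" using per by simp
  also have "integral {a+c..a+pi} h + integral {a..a+c} h = integral {a..a+pi} h"
    using Henstock_Kurzweil_Integration.integral_combine[where a=a and c="a+c" and b="a+pi" and f=h] c I by simp
  finally show ?thesis .
qed

theorem theorem4p2:
  fixes g :: "real \<Rightarrow> real" and m n :: nat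
  assumes meas: "g \<in> borel_measurable borel"
    and range: "\<And>x. 0 \<le> g x \<and> g x \<le> 1"
    and even: "\<And>x. g (- x) = g x"
    and periodic: "\<And>x. g (x + pi) = g x"
    and m_pos: "0 < m" and n_pos: "0 < n"
  shows "Gtilde g m n \<ge> Gtilde g 1 n"
proof -
  define \<mu> where "\<mu> = pi / real n"
  define P where "P = (\<lambda>(k::nat) x. \<Prod>i<n. g (x + real k * real i * \<mu>))"
  have Pmeas: "(\<lambda>x. P k (x + c)) \<in> borel_measurable borel" for k c
    unfolding P_def
    by (intro borel_measurable_prod measurable_compose[OF _ meas]) auto
  have Pbdd: "\<bar>P k x\<bar> \<le> 1" for k x
    unfolding P_def using range
    by (subst abs_of_nonneg) (auto intro!: prod_nonneg prod_le_1)
  have Pnn: "0 \<le> P k x" for k x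
    unfolding P_def using range by (auto intro!: prod_nonneg)
  have Pper: "P k (x + pi) = P k x" for k x
    unfolding P_def by (rule prod.cong) (auto, metis add.commute add.left_commute periodic)
  have Pbdd': "\<bar>P k (x + c)\<bar> \<le> 1" for k x c using Pbdd .
  have G: "Gtilde g k n = (1/pi) * integral {-(pi/2)..pi/2} (P k)" for k
    unfolding Gtilde_def P_def \<mu>_def
    by (subst interval_integral_eq_integral)
       (use bdd_int[OF Pmeas[of k 0] Pbdd'[of k _ 0], unfolded P_def \<mu>_def] in auto)
  have nmu: "real n * \<mu> = pi" using n_pos unfolding \<mu>_def by simp
  have P1step: "P 1 (x + \<mu>) = P 1 x" for x
  proof -
    obtain n' where n': "n = Suc n'" using n_pos by (cases n) auto
    define f where "f = (\<lambda>i::nat. g (x + real i * \<mu>))"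
    have fn: "f (Suc n') = f 0"
      unfolding f_def using periodic[of x] nmu n' by simp
    have "P 1 (x + \<mu>) = (\<Prod>i<Suc n'. f (Suc i))"
      unfolding P_def f_def n' by (intro prod.cong refl) (simp add: algebra_simps)
    also have "\<dots> = (\<Prod>i<n'. f (Suc i)) * f 0" using fn by simp
    also have "\<dots> = (\<Prod>i<Suc n'. f i)" by (subst prod.lessThan_Suc_shift) (simp add: mult.commute)
    also have "\<dots> = P 1 x" unfolding P_def f_def n' by simp
    finally show ?thesis .
  qed
  have P1shift: "P 1 (x + real k * \<mu>) = P 1 x" for k x
  proof (induction k)
    case (Suc k)
    have "P 1 (x + real (Suc k) * \<mu>) = P 1 ((x + real k * \<mu>) + \<mu>)"
      by (simp add: algebra_simps)
    also have "\<dots> = P 1 x" using P1step Suc by simp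
    finally show ?case .
  qed simp
  have prodeq: "(\<Prod>k<n. P m (x + real k * \<mu>)) = P 1 x ^ n" for x
  proof -
    have "(\<Prod>k<n. P m (x + real k * \<mu>)) =
          (\<Prod>k<n. \<Prod>i<n. g (x + real (m*i) * \<mu> + real 1 * real k * \<mu>))"
      unfolding P_def by (intro prod.cong refl) (simp add: algebra_simps)
    also have "\<dots> = (\<Prod>i<n. \<Prod>k<n. g (x + real (m*i) * \<mu> + real 1 * real k * \<mu>))"
      by (rule prod.swap)
    also have "\<dots> = (\<Prod>i<n. P 1 (x + real (m*i) * \<mu>))"
      unfolding P_def by simp
    also have "\<dots> = (\<Prod>i<n. P 1 x)" by (intro prod.cong refl) (rule P1shift)
    finally show ?thesis by simp
  qed
  have amgm: "P 1 x \<le> (\<Sum>k<n. P m (x + real k * \<mu>) / real n)" for x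
  proof -
    have "(\<Prod>k<n. P m (x + real k * \<mu>)) powr (1 / real (card {..<n}))
          \<le> (\<Sum>k<n. P m (x + real k * \<mu>) / real (card {..<n}))"
      using n_pos Pnn by (intro arith_geom_mean) auto
    moreover have "(P 1 x ^ n) powr (1 / real n) = P 1 x"
    proof (cases "P 1 x = 0")
      case True then show ?thesis using n_pos by simp
    next
      case False
      then have "P 1 x > 0" using Pnn[of 1 x] by simp
      then show ?thesis using n_pos
        by (simp add: powr_realpow[symmetric] powr_powr)
    qed
    ultimately show ?thesis using prodeq by simp
  qed
  define I where "I = {-(pi/2)..-(pi/2)+pi}"
  have Ieq: "{-(pi/2)..pi/2} = I" unfolding I_def by simp
  have Pint: "(\<lambda>x. P k (x + c)) integrable_on I" for k c
    unfolding I_def by (rule bdd_integrable_on[OF Pmeas Pbdd'])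
  have Pint0: "P k integrable_on I" for k using Pint[of k 0] by simp
  have "integral I (P 1) \<le> integral I (\<lambda>x. \<Sum>k<n. P m (x + real k * \<mu>) / real n)"
    using amgm Pint0 Pint by (intro integral_le integrable_sum integrable_on_divide) auto
  also have "\<dots> = (\<Sum>k<n. integral I (\<lambda>x. P m (x + real k * \<mu>)) / real n)"
    using Pint by (subst integral_sum) (auto intro: integrable_on_divide)
  also have "\<dots> = (\<Sum>k<n. integral I (P m) / real n)"
  proof (intro sum.cong refl)
    fix k assume k: "k \<in> {..<n}"
    have "real k * \<mu> \<le> real n * \<mu>"
      using k unfolding \<mu>_def by (intro mult_right_mono) auto
    then have "0 \<le> real k * \<mu>" "real k * \<mu> \<le> pi" using nmu unfolding \<mu>_def by auto
    then show "integral I (\<lambda>x. P m (x + real k * \<mu>)) / real n = integral I (P m) / real n"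
      unfolding I_def using period_shift[OF Pmeas[of m 0] Pbdd'[of m _ 0], of "real k * \<mu>" "-(pi/2)"] Pper by simp
  qed
  also have "\<dots> = integral I (P m)" using n_pos by simp
  finally have le: "integral I (P 1) \<le> integral I (P m)" .
  show ?thesis unfolding G Ieq using le by (simp add: divide_right_mono)
qed

end
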